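(* Let $A$ and $B$ be nonempty closed subsets of a complete metric space $(X,\rho)$ such that the ordered pair $(A,B)$ has the $BUC$ property. Let $T:A\cup B\to A\cup B$ be a cyclic map and suppose there exists $k\in(0,1)$ such that $$\rho(Tx,Ty)\le k\,\rho(x,y)+(1-k)\,\mathrm{dist}(A,B)\quad\text{for all }x\in A,\ y\in B.$$ Then $T$ has a unique best proximity point $x$ in $A$, and for every $x_0\in A$ the sequence $\{T^{2n}x_0\}_{n=1}^\infty$ converges to $x$. Moreover $T$ has at least one best proximity point in $B$, and if the ordered pair $(B,A)$ also has the $BUC$ property, then the best proximity point of $T$ in $B$ is unique.
   Context: $\mathrm{dist}(A,B)=\inf\{\rho(a,b):a\in A,\ b\in B\}$. A map $T:A\cup B\to A\cup B$ is cyclic if $T(A)\subseteq B$ and $T(B)\subseteq A$. A point $x\in A$ (resp. $x\in B$) is a best proximity point of $T$ in $A$ (resp. in $B$) if $\rho(x,Tx)=\mathrm{dist}(A,B)$. The ordered pair $(A,B)$ has the bounded $UC$ property ($BUC$) if for all bounded sequences $\{x_n\},\{z_n\}\subset A$ and every sequence $\{y_n\}\subset B$ with $\lim_n\rho(x_n,y_n)=\lim_n\rho(z_n,y_n)=\mathrm{dist}(A,B)$ one has $\lim_n\rho(x_n,z_n)=0$; the property for $(B,A)$ is defined with the roles of $A$ and $B$ interchanged. *)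

theory Defs
  imports "HOL-Analysis.Analysis"
begin

text \<open>dist(A,B) is the library notion setdist (infimum of distances; the sets
  considered are nonempty).\<close>

definition cyclic_map :: "'a set \<Rightarrow> 'a set \<Rightarrow> ('a \<Rightarrow> 'a) \<Rightarrow> bool" where
  "cyclic_map A B T \<longleftrightarrow> T ` A \<subseteq> B \<and> T ` B \<subseteq> A"

definition best_proximity_point ::
  "'a::metric_space set \<Rightarrow> 'a set \<Rightarrow> ('a \<Rightarrow> 'a) \<Rightarrow> 'a \<Rightarrow> bool" where
  "best_proximity_point A B T x \<longleftrightarrow> x \<in> A \<and> dist x (T x) = setdist A B"

definition BUC :: "'a::metric_space set \<Rightarrow> 'a set \<Rightarrow> bool" where
  "BUC A B \<longleftrightarrow>
    (\<forall>x z y :: nat \<Rightarrow> 'a.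
       range x \<subseteq> A \<and> bounded (range x) \<and> range z \<subseteq> A \<and> bounded (range z) \<and>
       range y \<subseteq> B \<and>
       (\<lambda>n. dist (x n) (y n)) \<longlonglongrightarrow> setdist A B \<and>
       (\<lambda>n. dist (z n) (y n)) \<longlonglongrightarrow> setdist A B
       \<longrightarrow> (\<lambda>n. dist (x n) (z n)) \<longlonglongrightarrow> 0)"

end

theory Submission
  imports Defs
begin

locale bpl =
  fixes A B :: "'a::complete_space set" and T :: "'a \<Rightarrow> 'a" and k :: real
  assumes cycA: "T ` A \<subseteq> B" and cycB: "T ` B \<subseteq> A" and k0: "0 < k" and k1: "k < 1"
  and contr: "\<And>x y. x \<in> A \<Longrightarrow> y \<in> B \<Longrightarrow>
           dist (T x) (T y) \<le> k * dist x y + (1 - k) * setdist A B"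
begin

abbreviation "d \<equiv> setdist A B"

lemma dge: "x \<in> A \<Longrightarrow> y \<in> B \<Longrightarrow> d \<le> dist x y" by (rule setdist_le_dist)

lemma mixed: "(u \<in> A \<and> v \<in> B) \<or> (u \<in> B \<and> v \<in> A) \<Longrightarrow>
   dist (T u) (T v) \<le> k * dist u v + (1 - k) * d"
  using contr by (metis dist_commute)

lemma orbit: "x \<in> A \<Longrightarrow> (T^^n) x \<in> (if even n then A else B)"
  by (induction n) (use cycA cycB in auto)

lemma orbitA: "x \<in> A \<Longrightarrow> even n \<Longrightarrow> (T^^n) x \<in> A" using orbit[of x n] by simp
lemma orbitB: "x \<in> A \<Longrightarrow> odd n \<Longrightarrow> (T^^n) x \<in> B" using orbit[of x n] by simp

lemma orbit2: "x \<in> A \<Longrightarrow> odd (p + q) \<Longrightarrow>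
   ((T^^p) x \<in> A \<and> (T^^q) x \<in> B) \<or> ((T^^p) x \<in> B \<and> (T^^q) x \<in> A)"
  using orbitA[of x p] orbitA[of x q] orbitB[of x p] orbitB[of x q] by auto

lemma stepD: "x \<in> A \<Longrightarrow> dist ((T^^n) x) ((T^^Suc n) x) \<le> dist x (T x)"
proof (induction n)
  case 0 show ?case by simp
next
  case (Suc n)
  have m: "((T^^n) x \<in> A \<and> (T^^Suc n) x \<in> B) \<or> ((T^^n) x \<in> B \<and> (T^^Suc n) x \<in> A)"
    using orbit2[OF Suc.prems, of n "Suc n"] by simp
  have "dist ((T^^Suc n) x) ((T^^Suc (Suc n)) x) = dist (T((T^^n) x)) (T((T^^Suc n) x))" by simp
  also have "\<dots> \<le> k*dist ((T^^n) x) ((T^^Suc n) x) + (1-k)*d" by (rule mixed[OF m])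
  also have "\<dots> \<le> k*dist x (T x) + (1-k)*dist x (T x)"
    using Suc.IH[OF Suc.prems] k0 k1 dge[OF Suc.prems, of "T x"] cycA Suc.prems
    by (intro add_mono mult_left_mono) auto
  finally show ?case by (simp add: algebra_simps)
qed

definition "E x = (k * dist x (T x) + dist x (T x)) / (1 - k) + d"
definition "C x = E x + dist x (T x)"

lemma E_nonneg: "0 \<le> E x"
  using k1 by (simp add: E_def k0 less_imp_le)

lemma evenb: assumes x: "x \<in> A" shows "dist ((T^^(2*n)) x) x \<le> E x"
proof (cases n)
  case 0 then show ?thesis using E_nonneg by simp
next
  case (Suc m)
  define u where "u = (T^^(2*m+1)) x"
  define D where "D = dist x (T x)"
  define b where "b = dist (T u) x"
  have uB: "u \<in> B" unfolding u_def by (rule orbitB[OF x]) simp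
  have eq: "(T^^(2*n)) x = T u" unfolding u_def Suc by simp
  have 1: "dist (T u) (T x) \<le> k*dist u x + (1-k)*d" using mixed uB x by blast
  have 2: "dist u (T u) \<le> D" using stepD[OF x, of "2*m+1"] unfolding u_def D_def by simp
  have 3: "dist u x \<le> D + b" using dist_triangle[of u x "T u"] 2 unfolding b_def by linarith
  have 4: "b \<le> dist (T u) (T x) + D" using dist_triangle[of "T u" x "T x"] unfolding b_def D_def
    by (simp add: dist_commute)
  have "k * dist u x \<le> k*(D+b)" using 3 k0 by (intro mult_left_mono) auto
  then have "b \<le> k*(D+b) + (1-k)*d + D" using 1 4 by linarith
  then have "(b - d) * (1-k) \<le> k*D + D" by (simp add: algebra_simps)
  then have "b - d \<le> (k*D+D)/(1-k)" using k1 by (simp add: pos_le_divide_eq)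
  then show ?thesis unfolding eq E_def b_def D_def by linarith
qed

lemma allb: assumes x: "x \<in> A" shows "dist ((T^^r) x) x \<le> C x"
proof (cases "even r")
  case True
  then obtain n where r: "r = 2*n" by blast
  show ?thesis unfolding r using evenb[OF x, of n] zero_le_dist[of x "T x"] unfolding C_def by linarith
next
  case False
  then obtain n where r0: "r = 2*n+1" by (rule oddE)
  then have r: "r = Suc (2*n)" by simp
  have "dist ((T^^r) x) x \<le> dist ((T^^r) x) ((T^^(2*n)) x) + dist ((T^^(2*n)) x) x"
    by (rule dist_triangle)
  moreover have "dist ((T^^r) x) ((T^^(2*n)) x) \<le> dist x (T x)"
    using stepD[OF x, of "2*n"] r by (simp add: dist_commute)
  ultimately show ?thesis using evenb[OF x, of n] unfolding C_def by linarith
qed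

lemma pairb: assumes x: "x \<in> A" shows "dist ((T^^p) x) ((T^^q) x) \<le> 2 * C x"
  using dist_triangle[of "(T^^p) x" "(T^^q) x" x] allb[OF x, of p] allb[OF x, of q]
  by (simp add: dist_commute)

lemma mixb: assumes x: "x \<in> A"
  shows "odd (p+q) \<Longrightarrow> i \<le> min p q \<Longrightarrow> dist ((T^^p) x) ((T^^q) x) \<le> k^i*(2*C x) + d"
proof (induction i arbitrary: p q)
  case 0
  have "0 \<le> d" by simp
  with pairb[OF x, of p q] show ?case by (simp only: power_0 mult_1; linarith)
next
  case (Suc i)
  then obtain p' q' where pq: "p = Suc p'" "q = Suc q'" by (metis Suc_le_D min.bounded_iff)
  have o: "odd (p'+q')" "i \<le> min p' q'" using Suc.prems pq by auto
  have "dist ((T^^p) x) ((T^^q) x) = dist (T ((T^^p') x)) (T ((T^^q') x))" using pq by simp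
  also have "\<dots> \<le> k * dist ((T^^p') x) ((T^^q') x) + (1-k)*d"
    by (rule mixed[OF orbit2[OF x o(1)]])
  also have "\<dots> \<le> k * (k^i*(2*C x) + d) + (1-k)*d"
    using Suc.IH[OF o] k0 k1 by (intro add_mono mult_left_mono) auto
  finally show ?case by (simp add: algebra_simps)
qed

lemma klim: "(\<lambda>j. k^(2*j)*c + e) \<longlonglongrightarrow> e"
proof -
  have "(\<lambda>j. (k^2)^j) \<longlonglongrightarrow> 0" using k0 k1
    by (intro LIMSEQ_power_zero) (simp add: power_less_one_iff abs_of_pos)
  then have "(\<lambda>j. k^(2*j)) \<longlonglongrightarrow> 0" by (simp add: power_mult)
  then have "(\<lambda>j. k^(2*j)*c + e) \<longlonglongrightarrow> 0*c + e" by (intro tendsto_intros)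
  then show ?thesis by simp
qed


lemma cauchy: assumes buc: "BUC A B" and x0: "x0 \<in> A"
  shows "Cauchy (\<lambda>n. (T^^(2*n)) x0)"
proof (rule ccontr)
  define s where "s = (\<lambda>n. (T^^(2*n)) x0)"
  assume "\<not> Cauchy (\<lambda>n. (T^^(2*n)) x0)"
  then obtain e where e: "e > 0" "\<forall>N. \<exists>m\<ge>N. \<exists>n\<ge>N. e \<le> dist (s m) (s n)"
    unfolding Cauchy_def s_def by (auto simp: not_less)
  then obtain mm nn where mn: "\<And>N. mm N \<ge> N \<and> nn N \<ge> N \<and> e \<le> dist (s (mm N)) (s (nn N))"
    by metis
  define hi where "hi j = max (mm j) (nn j)" for j
  define lo where "lo j = min (mm j) (nn j)" for j
  define xs where "xs j = s (hi j)" for j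
  define zs where "zs j = s (lo j)" for j
  define ys where "ys j = (T^^(2*lo j+1)) x0" for j
  have de: "dist (xs j) (zs j) = dist (s (mm j)) (s (nn j))" for j
    unfolding xs_def zs_def hi_def lo_def
    by (cases "mm j \<le> nn j") (auto simp: max_def min_def dist_commute)
  have lohi: "j \<le> lo j" "lo j \<le> hi j" for j using mn[of j] unfolding lo_def hi_def by auto
  have xA: "range xs \<subseteq> A" unfolding xs_def s_def using orbitA[OF x0] by auto
  have zA: "range zs \<subseteq> A" unfolding zs_def s_def using orbitA[OF x0] by auto
  have yB1: "ys j \<in> B" for j unfolding ys_def by (rule orbitB[OF x0]) simp
  have yB: "range ys \<subseteq> B" using yB1 by auto
  have cb: "dist x0 ((T^^r) x0) \<le> C x0" for r using allb[OF x0, of r] by (simp add: dist_commute)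
  have bx: "bounded (range xs)" by (rule bounded_subset[OF bounded_cball[of x0 "C x0"]]) (auto simp: xs_def s_def cb)
  have bz: "bounded (range zs)" by (rule bounded_subset[OF bounded_cball[of x0 "C x0"]]) (auto simp: zs_def s_def cb)
  have l1: "(\<lambda>j. dist (xs j) (ys j)) \<longlonglongrightarrow> d"
  proof (rule real_tendsto_sandwich[OF _ _ tendsto_const klim[of "2 * C x0" d]])
    show "\<forall>\<^sub>F j in sequentially. d \<le> dist (xs j) (ys j)"
      using xA yB dge by (auto intro!: always_eventually)
    show "\<forall>\<^sub>F j in sequentially. dist (xs j) (ys j) \<le> k ^ (2 * j) * (2 * C x0) + d"
    proof (intro always_eventually allI)
      fix j
      show "dist (xs j) (ys j) \<le> k ^ (2 * j) * (2 * C x0) + d"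
        unfolding xs_def ys_def s_def using lohi[of j]
        by (intro mixb[OF x0]) auto
    qed
  qed
  have l2: "(\<lambda>j. dist (zs j) (ys j)) \<longlonglongrightarrow> d"
  proof (rule real_tendsto_sandwich[OF _ _ tendsto_const klim[of "2 * C x0" d]])
    show "\<forall>\<^sub>F j in sequentially. d \<le> dist (zs j) (ys j)"
      using zA yB dge by (auto intro!: always_eventually)
    show "\<forall>\<^sub>F j in sequentially. dist (zs j) (ys j) \<le> k ^ (2 * j) * (2 * C x0) + d"
    proof (intro always_eventually allI)
      fix j
      show "dist (zs j) (ys j) \<le> k ^ (2 * j) * (2 * C x0) + d"
        unfolding zs_def ys_def s_def using lohi[of j]
        by (intro mixb[OF x0]) auto
    qed
  qed
  have "(\<lambda>j. dist (xs j) (zs j)) \<longlonglongrightarrow> 0"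
    using buc xA zA yB bx bz l1 l2 unfolding BUC_def by blast
  moreover have "\<exists>N. \<forall>j\<ge>N. e \<le> dist (xs j) (zs j)" using de mn by auto
  ultimately have "e \<le> 0" by (rule LIMSEQ_le_const)
  with e show False by simp
qed


lemma exlim: assumes buc: "BUC A B" and cl: "closed A" and x0: "x0 \<in> A"
  shows "\<exists>x. best_proximity_point A B T x \<and> (\<lambda>n. (T^^(2*n)) x0) \<longlonglongrightarrow> x"
proof -
  define s where "s = (\<lambda>n. (T^^(2*n)) x0)"
  have "convergent s" using cauchy[OF buc x0] unfolding s_def Cauchy_convergent_iff .
  then obtain x where lim: "s \<longlonglongrightarrow> x" unfolding convergent_def by blast
  have sA: "s n \<in> A" for n unfolding s_def by (rule orbitA[OF x0]) simp
  have xA: "x \<in> A" by (rule closed_sequentially[OF cl sA lim])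
  have TxB: "T x \<in> B" using cycA xA by auto
  define g where "g n = dist x (s (Suc n)) + (k*(dist x (s (Suc n)) + (k^(2*n)*(2*C x0)+d)) + (1-k)*d)" for n
  have le: "dist x (T x) \<le> g n" for n
  proof -
    define w where "w = (T^^(2*n+1)) x0"
    have wB: "w \<in> B" unfolding w_def by (rule orbitB[OF x0]) simp
    have sw: "s (Suc n) = T w" unfolding s_def w_def by simp
    have a: "dist x (T x) \<le> dist x (s (Suc n)) + dist (s (Suc n)) (T x)" by (rule dist_triangle)
    have b: "dist (T w) (T x) \<le> k * dist w x + (1-k)*d" using mixed wB xA by blast
    have c: "dist w x \<le> dist (s (Suc n)) w + dist x (s (Suc n))"
      using dist_triangle[of w x "s (Suc n)"] by (simp add: dist_commute)
    have e: "dist (s (Suc n)) w \<le> k^(2*n)*(2*C x0) + d"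
      unfolding s_def w_def by (rule mixb[OF x0]) auto
    have "k * dist w x \<le> k * (dist x (s (Suc n)) + (k^(2*n)*(2*C x0)+d))"
      using c e k0 by (intro mult_left_mono) auto
    then show ?thesis using a b unfolding g_def sw by linarith
  qed
  have "(\<lambda>n. dist x (s (Suc n))) \<longlonglongrightarrow> dist x x"
    using LIMSEQ_Suc[OF lim] by (intro tendsto_intros)
  then have "(\<lambda>n. dist x (s (Suc n))) \<longlonglongrightarrow> 0" by simp
  moreover have "(\<lambda>n. k^(2*n)) \<longlonglongrightarrow> 0" using klim[of 1 0] by simp
  ultimately have "g \<longlonglongrightarrow> 0 + (k*(0 + (0*(2*C x0)+d)) + (1-k)*d)"
    unfolding g_def by (intro tendsto_intros)
  then have "g \<longlonglongrightarrow> d" by (simp add: algebra_simps)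
  then have "dist x (T x) \<le> d" by (rule LIMSEQ_le_const) (use le in auto)
  moreover have "d \<le> dist x (T x)" using dge xA TxB by blast
  ultimately show ?thesis using xA lim unfolding best_proximity_point_def s_def by auto
qed

lemma fix2: assumes buc: "BUC A B" and bp: "best_proximity_point A B T x"
  shows "T (T x) = x"
proof -
  have xA: "x \<in> A" and dx: "dist x (T x) = d" using bp unfolding best_proximity_point_def by auto
  have TxB: "T x \<in> B" using cycA xA by auto
  have TTxA: "T (T x) \<in> A" using cycB TxB by auto
  have "dist (T (T x)) (T x) \<le> k * dist (T x) x + (1-k)*d" using mixed TxB xA by blast
  then have h1: "dist (T (T x)) (T x) \<le> d" using dx by (simp add: dist_commute algebra_simps)
  have h2: "d \<le> dist (T (T x)) (T x)" using dge TTxA TxB by blast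
  note H = buc[unfolded BUC_def, rule_format, of "\<lambda>_. x" "\<lambda>_. T (T x)" "\<lambda>_. T x"]
  have "(\<lambda>n. dist x (T (T x))) \<longlonglongrightarrow> 0"
    by (rule H) (use xA TTxA TxB dx h1 h2 in auto)
  then have "dist x (T (T x)) = 0" by (simp add: LIMSEQ_const_iff)
  then show ?thesis by simp
qed

lemma uniq: assumes buc: "BUC A B" and bx: "best_proximity_point A B T x"
  and by': "best_proximity_point A B T y" shows "x = y"
proof -
  have xA: "x \<in> A" and dx: "dist x (T x) = d" using bx unfolding best_proximity_point_def by auto
  have yA: "y \<in> A" and dy: "dist y (T y) = d" using by' unfolding best_proximity_point_def by auto
  have f1: "T (T x) = x" by (rule fix2[OF buc bx])
  have f2: "T (T y) = y" by (rule fix2[OF buc by'])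
  have TxB: "T x \<in> B" and TyB: "T y \<in> B" using cycA xA yA by auto
  define a where "a = dist (T x) y"
  define b where "b = dist x (T y)"
  have h1: "a \<le> k * b + (1-k)*d"
    using contr[OF xA TyB] f2 unfolding a_def b_def by simp
  have h2: "b \<le> k * a + (1-k)*d"
    using mixed[of "T x" y] TxB yA f1 unfolding a_def b_def by simp
  have "k*b \<le> k*(k * a + (1-k)*d)" using h2 k0 by (intro mult_left_mono) auto
  then have "(1 - k*k) * a \<le> (1 - k*k) * d" using h1 by (simp add: algebra_simps)
  moreover have "0 < 1 - k*k" using mult_strict_left_mono[OF k1 k0] k1 by simp
  ultimately have ad: "a \<le> d" by simp
  have "d \<le> a" unfolding a_def using dge yA TxB by (simp add: dist_commute)
  with ad have ya: "dist y (T x) = d" unfolding a_def by (simp add: dist_commute)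
  note H = buc[unfolded BUC_def, rule_format, of "\<lambda>_. x" "\<lambda>_. y" "\<lambda>_. T x"]
  have "(\<lambda>n. dist x y) \<longlonglongrightarrow> 0"
    by (rule H) (use xA yA TxB dx ya in auto)
  then have "dist x y = 0" by (simp add: LIMSEQ_const_iff)
  then show ?thesis by simp
qed

end

theorem theorem31:
  fixes A B :: "'a::complete_space set" and T :: "'a \<Rightarrow> 'a" and k :: real
  assumes "A \<noteq> {}" and "B \<noteq> {}" and "closed A" and "closed B"
    and "BUC A B"
    and "cyclic_map A B T"
    and "0 < k" and "k < 1"
    and "\<And>x y. x \<in> A \<Longrightarrow> y \<in> B \<Longrightarrow>
           dist (T x) (T y) \<le> k * dist x y + (1 - k) * setdist A B"
  shows "(\<exists>x. (\<forall>x'. best_proximity_point A B T x' \<longleftrightarrow> x' = x) \<and>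
             (\<forall>x0\<in>A. (\<lambda>n. (T ^^ (2 * n)) x0) \<longlonglongrightarrow> x)) \<and>
         (\<exists>y. best_proximity_point B A T y) \<and>
         (BUC B A \<longrightarrow> (\<exists>!y. best_proximity_point B A T y))"
proof -
  interpret P: bpl A B T k
    using assms unfolding cyclic_map_def by unfold_locales auto
  interpret Q: bpl B A T k
  proof unfold_locales
    show "T ` B \<subseteq> A" "T ` A \<subseteq> B" "0 < k" "k < 1" using assms unfolding cyclic_map_def by auto
    fix x y assume "x \<in> B" "y \<in> A"
    then have "dist (T y) (T x) \<le> k * dist y x + (1 - k) * setdist A B" using assms(9) by blast
    then show "dist (T x) (T y) \<le> k * dist x y + (1 - k) * setdist B A"
      by (simp add: dist_commute setdist_sym)
  qed
  obtain a where aA: "a \<in> A" using assms(1) by blast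
  obtain x where bx: "best_proximity_point A B T x"
    using P.exlim[OF assms(5) assms(3) aA] by blast
  have ux: "\<forall>x'. best_proximity_point A B T x' \<longleftrightarrow> x' = x"
    using P.uniq[OF assms(5) bx] bx by blast
  have lx: "\<forall>x0\<in>A. (\<lambda>n. (T ^^ (2 * n)) x0) \<longlonglongrightarrow> x"
  proof
    fix x0 assume "x0 \<in> A"
    then obtain x1 where "best_proximity_point A B T x1" "(\<lambda>n. (T ^^ (2 * n)) x0) \<longlonglongrightarrow> x1"
      using P.exlim[OF assms(5) assms(3)] by blast
    then show "(\<lambda>n. (T ^^ (2 * n)) x0) \<longlonglongrightarrow> x" using ux by simp
  qed
  have f: "T (T x) = x" by (rule P.fix2[OF assms(5) bx])
  have by': "best_proximity_point B A T (T x)"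
    using bx f assms(6) unfolding best_proximity_point_def cyclic_map_def
    by (auto simp: setdist_sym dist_commute)
  show ?thesis using ux lx by' Q.uniq by blast
qed

end
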